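(* Let $b_1,b_2,b_3\in\mathbb{R}$ with $b_1b_2b_3\neq0$ and $b_2b_3<0$, and consider the system $$\dot x_1=b_1x_2,\qquad \dot x_2=b_2x_1x_3,\qquad \dot x_3=b_3x_1x_2 .$$ Then for every $m\in\mathbb{R}\setminus\{0\}$ the equilibrium state $e_1^m=(m,0,0)$ is nonlinear stable.
   Context: Nonlinear stable means stable in the sense of Lyapunov: for every neighbourhood $U$ of the equilibrium there is a neighbourhood $V$ such that every trajectory starting in $V$ remains in $U$ for all $t\ge0$. *)

theory Defs
  imports "HOL-Analysis.Analysis"
begin

text \<open>State space R^3 modelled as real \<times> real \<times> real (product topology = Euclidean).\<close>

definition sys_field :: "real \<Rightarrow> real \<Rightarrow> real \<Rightarrow> real \<times> real \<times> real \<Rightarrow> real \<times> real \<times> real" where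
  "sys_field b1 b2 b3 = (\<lambda>(x1, x2, x3). (b1 * x2, b2 * x1 * x3, b3 * x1 * x2))"

definition solves_on :: "('a::real_normed_vector \<Rightarrow> 'a) \<Rightarrow> (real \<Rightarrow> 'a) \<Rightarrow> real set \<Rightarrow> bool" where
  "solves_on f x I \<longleftrightarrow> (\<forall>t\<in>I. (x has_vector_derivative f (x t)) (at t within I))"

text \<open>Lyapunov (nonlinear) stability: for every neighbourhood U of e there is a neighbourhood V
  of e such that every trajectory starting in V stays in U for all t \<ge> 0 (for as long as it is
  defined; trajectories on [0,T) for every T cover all forward solutions).\<close>
definition nonlinear_stable :: "('a::real_normed_vector \<Rightarrow> 'a) \<Rightarrow> 'a \<Rightarrow> bool" where
  "nonlinear_stable f e \<longleftrightarrow>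
     (\<forall>U. open U \<and> e \<in> U \<longrightarrow>
        (\<exists>V. open V \<and> e \<in> V \<and>
           (\<forall>x T. solves_on f x {0..<T} \<and> x 0 \<in> V \<longrightarrow> (\<forall>t\<in>{0..<T}. x t \<in> U))))"

end

theory Submission
  imports Defs
begin

lemma vd_fst: "(f has_vector_derivative v) F \<Longrightarrow> ((\<lambda>t. fst (f t)) has_vector_derivative fst v) F"
  unfolding has_vector_derivative_def
  by (drule has_derivative_fst) simp

lemma vd_snd: "(f has_vector_derivative v) F \<Longrightarrow> ((\<lambda>t. snd (f t)) has_vector_derivative snd v) F"
  unfolding has_vector_derivative_def
  by (drule has_derivative_snd) simp

lemma comp_derivs:
  assumes "solves_on (sys_field b1 b2 b3) x S" "t \<in> S"
  shows "((\<lambda>s. fst (x s)) has_real_derivative b1 * fst (snd (x t))) (at t within S)"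
    "((\<lambda>s. fst (snd (x s))) has_real_derivative b2 * fst (x t) * snd (snd (x t))) (at t within S)"
    "((\<lambda>s. snd (snd (x s))) has_real_derivative b3 * fst (x t) * fst (snd (x t))) (at t within S)"
proof -
  have d: "(x has_vector_derivative sys_field b1 b2 b3 (x t)) (at t within S)"
    using assms unfolding solves_on_def by blast
  obtain a b c where abc: "x t = (a, b, c)" by (cases "x t") auto
  show "((\<lambda>s. fst (x s)) has_real_derivative b1 * fst (snd (x t))) (at t within S)"
    using vd_fst[OF d] abc by (simp add: sys_field_def has_real_derivative_iff_has_vector_derivative)
  show "((\<lambda>s. fst (snd (x s))) has_real_derivative b2 * fst (x t) * snd (snd (x t))) (at t within S)"
    using vd_fst[OF vd_snd[OF d]] abc by (simp add: sys_field_def has_real_derivative_iff_has_vector_derivative)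
  show "((\<lambda>s. snd (snd (x s))) has_real_derivative b3 * fst (x t) * fst (snd (x t))) (at t within S)"
    using vd_snd[OF vd_snd[OF d]] abc by (simp add: sys_field_def has_real_derivative_iff_has_vector_derivative)
qed

lemma conserved:
  assumes "solves_on (sys_field b1 b2 b3) x {0..<T}" "t \<in> {0..<T}"
  shows "b3\<^sup>2 * (fst (snd (x t)))\<^sup>2 - b2 * b3 * (snd (snd (x t)))\<^sup>2
       = b3\<^sup>2 * (fst (snd (x 0)))\<^sup>2 - b2 * b3 * (snd (snd (x 0)))\<^sup>2"
    "b3 * (fst (x t))\<^sup>2 - 2 * b1 * snd (snd (x t)) = b3 * (fst (x 0))\<^sup>2 - 2 * b1 * snd (snd (x 0))"
proof -
  have z: "0 \<in> {0..<T}" using assms(2) by auto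
  have "\<exists>c. \<forall>s\<in>{0..<T}. b3\<^sup>2 * (fst (snd (x s)))\<^sup>2 - b2 * b3 * (snd (snd (x s)))\<^sup>2 = c"
  proof (rule has_field_derivative_zero_constant)
    fix s assume s: "s \<in> {0..<T}"
    note D = comp_derivs[OF assms(1) s]
    have "((\<lambda>s. b3\<^sup>2 * (fst (snd (x s)))\<^sup>2 - b2 * b3 * (snd (snd (x s)))\<^sup>2) has_real_derivative
       b3\<^sup>2 * (2 * fst (snd (x s)) * (b2 * fst (x s) * snd (snd (x s))))
       - b2 * b3 * (2 * snd (snd (x s)) * (b3 * fst (x s) * fst (snd (x s))))) (at s within {0..<T})"
      using D(2,3) by (auto intro!: derivative_eq_intros simp: mult.assoc)
    moreover have "b3\<^sup>2 * (2 * fst (snd (x s)) * (b2 * fst (x s) * snd (snd (x s))))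
       - b2 * b3 * (2 * snd (snd (x s)) * (b3 * fst (x s) * fst (snd (x s)))) = 0"
      by (simp add: power2_eq_square algebra_simps)
    ultimately show "((\<lambda>s. b3\<^sup>2 * (fst (snd (x s)))\<^sup>2 - b2 * b3 * (snd (snd (x s)))\<^sup>2) has_real_derivative 0) (at s within {0..<T})"
      by simp
  qed simp
  then show "b3\<^sup>2 * (fst (snd (x t)))\<^sup>2 - b2 * b3 * (snd (snd (x t)))\<^sup>2
       = b3\<^sup>2 * (fst (snd (x 0)))\<^sup>2 - b2 * b3 * (snd (snd (x 0)))\<^sup>2"
    using assms(2) z by metis
  have "\<exists>c. \<forall>s\<in>{0..<T}. b3 * (fst (x s))\<^sup>2 - 2 * b1 * snd (snd (x s)) = c"
  proof (rule has_field_derivative_zero_constant)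
    fix s assume s: "s \<in> {0..<T}"
    note D = comp_derivs[OF assms(1) s]
    have "((\<lambda>s. b3 * (fst (x s))\<^sup>2 - 2 * b1 * snd (snd (x s))) has_real_derivative
       b3 * (2 * fst (x s) * (b1 * fst (snd (x s)))) - 2 * b1 * (b3 * fst (x s) * fst (snd (x s)))) (at s within {0..<T})"
      using D(1,3) by (auto intro!: derivative_eq_intros simp: mult.assoc)
    moreover have "b3 * (2 * fst (x s) * (b1 * fst (snd (x s)))) - 2 * b1 * (b3 * fst (x s) * fst (snd (x s))) = 0"
      by (simp add: algebra_simps)
    ultimately show "((\<lambda>s. b3 * (fst (x s))\<^sup>2 - 2 * b1 * snd (snd (x s))) has_real_derivative 0) (at s within {0..<T})"
      by simp
  qed simp
  then show "b3 * (fst (x t))\<^sup>2 - 2 * b1 * snd (snd (x t)) = b3 * (fst (x 0))\<^sup>2 - 2 * b1 * snd (snd (x 0))"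
    using assms(2) z by metis
qed

lemma cont_sol:
  assumes "solves_on f x S"
  shows "continuous_on S x"
  using assms unfolding solves_on_def continuous_on_eq_continuous_within
  by (blast intro: has_vector_derivative_continuous)


lemma abs_le_of_sq:
  fixes p M d :: real
  assumes "p\<^sup>2 \<le> M * d\<^sup>2" "0 \<le> d"
  shows "\<bar>p\<bar> \<le> sqrt M * d"
proof -
  have "sqrt (p\<^sup>2) \<le> sqrt (M * d\<^sup>2)" using assms(1) by (rule real_sqrt_le_mono)
  then show ?thesis using assms(2) by (simp add: real_sqrt_mult)
qed

theorem proposition4p2:
  fixes b1 b2 b3 m :: real
  assumes "b1 * b2 * b3 \<noteq> 0" and "b2 * b3 < 0" and "m \<noteq> 0"
  shows "nonlinear_stable (sys_field b1 b2 b3) (m, 0, 0)"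
  unfolding nonlinear_stable_def
proof (intro allI impI)
  fix U :: "(real \<times> real \<times> real) set"
  assume U: "open U \<and> (m, 0, 0) \<in> U"
  then obtain e where e: "e > 0" "ball (m, 0, 0) e \<subseteq> U"
    using open_contains_ball by blast
  define B where "B = b3\<^sup>2"
  define c where "c = - b2 * b3"
  have b3: "b3 \<noteq> 0" using assms(1) by auto
  have Bp: "B > 0" unfolding B_def using b3 by simp
  have cp: "c > 0" unfolding c_def using assms(2) by simp
  define M where "M = (B + c) / B + (B + c) / c"
  define L where "L = sqrt M"
  define K1 where "K1 = 2 * \<bar>b1\<bar> / \<bar>b3\<bar>"
  define N where "N = 3 * \<bar>m\<bar> + 2 * K1 * L"
  have M1: "(B + c) / B \<le> M" "(B + c) / c \<le> M" unfolding M_def using Bp cp by auto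
  have "(B + c) / B \<ge> 1" using Bp cp by simp
  then have Mge: "M \<ge> 1" using M1 by linarith
  have L1: "L \<ge> 1" unfolding L_def using Mge by simp
  have K1p: "K1 \<ge> 0" unfolding K1_def by simp
  have mp: "\<bar>m\<bar> > 0" using assms(3) by simp
  have Np: "N > 0" unfolding N_def using mp K1p L1 by (simp add: add_pos_nonneg)
  define d where "d = min 1 (min \<bar>m\<bar> (min (e / (4 * L)) (min (m\<^sup>2 / (2 * N)) (\<bar>m\<bar> * e / (4 * N)))))"
  have dp: "d > 0" unfolding d_def using e mp Np L1 by simp
  have d1: "d \<le> 1" "d \<le> \<bar>m\<bar>" "d \<le> e / (4 * L)" "d \<le> m\<^sup>2 / (2 * N)" "d \<le> \<bar>m\<bar> * e / (4 * N)"
    unfolding d_def by (simp_all add: min_le_iff_disj)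
  have Ld: "L * d \<le> e / 4" using d1(3) L1 by (simp add: field_simps)
  have Nd1: "N * d \<le> m\<^sup>2 / 2" using d1(4) Np by (simp add: field_simps)
  have Nd2: "N * d \<le> \<bar>m\<bar> * e / 4" using d1(5) Np by (simp add: field_simps)
  show "\<exists>V. open V \<and> (m, 0, 0) \<in> V \<and>
          (\<forall>x T. solves_on (sys_field b1 b2 b3) x {0..<T} \<and> x 0 \<in> V \<longrightarrow> (\<forall>t\<in>{0..<T}. x t \<in> U))"
  proof (intro exI conjI allI impI ballI)
    show "open (ball (m, 0, 0) d)" by simp
    show "(m, 0, 0) \<in> ball (m, 0, 0) d" using dp by simp
    fix x :: "real \<Rightarrow> real \<times> real \<times> real" and T t
    assume H: "solves_on (sys_field b1 b2 b3) x {0..<T} \<and> x 0 \<in> ball (m, 0, 0) d"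
    assume t: "t \<in> {0..<T}"
    have sol: "solves_on (sys_field b1 b2 b3) x {0..<T}" using H by blast
    define a0 where "a0 = fst (x 0)"
    define p0 where "p0 = fst (snd (x 0))"
    define q0 where "q0 = snd (snd (x 0))"
    have dx0: "dist (x 0) (m, 0, 0) < d" using H by (simp add: dist_commute)
    have a0d: "\<bar>a0 - m\<bar> < d"
      using dist_fst_le[of "x 0" "(m,0,0)"] dx0 unfolding a0_def by (simp add: dist_real_def)
    have "dist (snd (x 0)) (0, 0) < d" using dist_snd_le[of "x 0" "(m,0,0)"] dx0 by simp
    then have p0d: "\<bar>p0\<bar> < d" and q0d: "\<bar>q0\<bar> < d"
      using dist_fst_le[of "snd (x 0)" "(0,0)"] dist_snd_le[of "snd (x 0)" "(0,0)"]
      unfolding p0_def q0_def by (simp_all add: dist_real_def)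
    have a0m: "a0 * m > 0"
    proof -
      have "m > 0 \<or> m < 0" using assms(3) by linarith
      then show ?thesis using a0d d1(2) by (auto simp: abs_if zero_less_mult_iff split: if_splits)
    qed
    have bnd: "\<bar>fst (snd (x s))\<bar> \<le> L * d \<and> \<bar>snd (snd (x s))\<bar> \<le> L * d
       \<and> \<bar>(fst (x s))\<^sup>2 - m\<^sup>2\<bar> \<le> N * d" if s: "s \<in> {0..<T}" for s
    proof -
      define a where "a = fst (x s)"
      define p where "p = fst (snd (x s))"
      define q where "q = snd (snd (x s))"
      note C = conserved[OF sol s]
      have C1: "B * p\<^sup>2 + c * q\<^sup>2 = B * p0\<^sup>2 + c * q0\<^sup>2"
        using C(1) unfolding B_def c_def p_def q_def p0_def q0_def by simp
      have C2: "b3 * a\<^sup>2 - 2 * b1 * q = b3 * a0\<^sup>2 - 2 * b1 * q0"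
        using C(2) unfolding a_def q_def a0_def q0_def by simp
      have "p0\<^sup>2 \<le> d\<^sup>2" using power_mono[of "\<bar>p0\<bar>" d 2] p0d by simp
      moreover have "q0\<^sup>2 \<le> d\<^sup>2" using power_mono[of "\<bar>q0\<bar>" d 2] q0d by simp
      ultimately have S: "B * p\<^sup>2 + c * q\<^sup>2 \<le> (B + c) * d\<^sup>2"
        using C1 Bp cp by (simp add: distrib_right add_mono)
      have "B * p\<^sup>2 \<le> (B + c) * d\<^sup>2" using S cp by (smt (verit) mult_nonneg_nonneg zero_le_power2)
      then have "p\<^sup>2 \<le> (B + c) / B * d\<^sup>2" using Bp by (simp add: field_simps)
      also have "\<dots> \<le> M * d\<^sup>2" using M1(1) by (intro mult_right_mono) auto
      finally have pb: "\<bar>p\<bar> \<le> L * d" unfolding L_def using abs_le_of_sq dp by (simp add: less_imp_le)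
      have "c * q\<^sup>2 \<le> (B + c) * d\<^sup>2" using S Bp by (smt (verit) mult_nonneg_nonneg zero_le_power2)
      then have "q\<^sup>2 \<le> (B + c) / c * d\<^sup>2" using cp by (simp add: field_simps)
      also have "\<dots> \<le> M * d\<^sup>2" using M1(2) by (intro mult_right_mono) auto
      finally have qb: "\<bar>q\<bar> \<le> L * d" unfolding L_def using abs_le_of_sq dp by (simp add: less_imp_le)
      have q0b: "\<bar>q0\<bar> \<le> L * d" using q0d L1 dp
        by (smt (verit) mult_le_cancel_right1)
      have "a\<^sup>2 - a0\<^sup>2 = 2 * b1 * (q - q0) / b3" using C2 b3 by (simp add: field_simps)
      then have "\<bar>a\<^sup>2 - a0\<^sup>2\<bar> = K1 * \<bar>q - q0\<bar>" unfolding K1_def by (simp add: abs_mult)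
      also have "\<dots> \<le> K1 * (2 * L * d)" using qb q0b K1p by (intro mult_left_mono) auto
      finally have E1: "\<bar>a\<^sup>2 - a0\<^sup>2\<bar> \<le> 2 * K1 * L * d" by simp
      have "\<bar>a0\<^sup>2 - m\<^sup>2\<bar> = \<bar>a0 - m\<bar> * \<bar>a0 + m\<bar>" by (simp add: power2_eq_square algebra_simps abs_mult[symmetric])
      also have "\<dots> \<le> d * (3 * \<bar>m\<bar>)"
        using a0d d1(2) by (intro mult_mono) auto
      finally have E2: "\<bar>a0\<^sup>2 - m\<^sup>2\<bar> \<le> 3 * \<bar>m\<bar> * d" by (simp add: mult_ac)
      have "\<bar>a\<^sup>2 - m\<^sup>2\<bar> \<le> N * d" using E1 E2 unfolding N_def by (simp add: algebra_simps)
      then show ?thesis using pb qb unfolding a_def p_def q_def by simp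
    qed
    have nz: "(fst (x s))\<^sup>2 \<ge> m\<^sup>2 / 2" if s: "s \<in> {0..<T}" for s
      using bnd[OF s] Nd1 by linarith
    have sgn: "fst (x s) * m > 0" if s: "s \<in> {0..<T}" for s
    proof (rule ccontr)
      assume neg: "\<not> fst (x s) * m > 0"
      have cont: "continuous_on {0..s} (\<lambda>r. - (fst (x r) * m))"
        using cont_sol[OF sol] s
        by (intro continuous_intros) (auto elim: continuous_on_subset)
      have "\<exists>r. 0 \<le> r \<and> r \<le> s \<and> - (fst (x r) * m) = 0"
        using neg a0m s by (intro IVT'[OF _ _ _ cont]) (auto simp: a0_def)
      then obtain r where r: "0 \<le> r" "r \<le> s" "fst (x r) * m = 0" by auto
      then have "r \<in> {0..<T}" using s by auto
      from nz[OF this] r(3) mp have "m * m \<le> 0" by (simp add: power2_eq_square)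
      then show False using assms(3) by (auto simp: mult_le_0_iff)
    qed
    obtain a p q where apq: "x t = (a, p, q)" by (cases "x t") auto
    from bnd[OF t] apq have pb: "\<bar>p\<bar> \<le> e / 4" "\<bar>q\<bar> \<le> e / 4" and ab: "\<bar>a\<^sup>2 - m\<^sup>2\<bar> \<le> \<bar>m\<bar> * e / 4"
      using Ld Nd2 by auto
    have am: "a * m > 0" using sgn[OF t] apq by simp
    have "\<bar>a + m\<bar> \<ge> \<bar>m\<bar>" using am by (auto simp: zero_less_mult_iff abs_if)
    then have "\<bar>a - m\<bar> * \<bar>m\<bar> \<le> \<bar>a - m\<bar> * \<bar>a + m\<bar>" by (simp add: mult_left_mono)
    also have "\<dots> = \<bar>a\<^sup>2 - m\<^sup>2\<bar>" by (simp add: power2_eq_square algebra_simps abs_mult[symmetric])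
    finally have "\<bar>a - m\<bar> * \<bar>m\<bar> \<le> \<bar>m\<bar> * e / 4" using ab by linarith
    then have amb: "\<bar>a - m\<bar> \<le> e / 4" using mp by (simp add: field_simps)
    have sq: "(a - m)\<^sup>2 + p\<^sup>2 + q\<^sup>2 < e\<^sup>2"
    proof -
      have "(a - m)\<^sup>2 \<le> (e/4)\<^sup>2" using power_mono[of "\<bar>a - m\<bar>" "e/4" 2] amb by simp
      moreover have "p\<^sup>2 \<le> (e/4)\<^sup>2" using power_mono[of "\<bar>p\<bar>" "e/4" 2] pb by simp
      moreover have "q\<^sup>2 \<le> (e/4)\<^sup>2" using power_mono[of "\<bar>q\<bar>" "e/4" 2] pb by simp
      moreover have "3 * (e/4)\<^sup>2 < e\<^sup>2" using e(1) by (simp add: power2_eq_square)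
      ultimately show ?thesis by linarith
    qed
    have "dist (x t) (m, 0, 0) = sqrt ((a - m)\<^sup>2 + p\<^sup>2 + q\<^sup>2)"
      using apq by (simp add: dist_Pair_Pair dist_real_def add.assoc)
    also have "\<dots> < sqrt (e\<^sup>2)" using sq by (simp only: real_sqrt_less_iff)
    also have "\<dots> = e" using e(1) by simp
    finally show "x t \<in> U" using e(2) by (auto simp: dist_commute)
  qed
qed

end
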